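(* Let $F\neq\mathbb{C}$ be a local field of characteristic zero, with uniformizer $\varpi$ when $F$ is non-archimedean. For $\phi\in\mathcal{S}(F^2)$ define, for $a\in F^\times$, $$H(a)=\begin{cases}\sum_{b\in\mathbb{Z}}|\phi(a\varpi^b,\varpi^{-b})|, & F\ne\mathbb{R},\\ \int_{\mathbb{R}_+^\times}|\phi(at,t^{-1})|\,d^\times t, & F=\mathbb{R}.\end{cases}$$ Then there exist a finite index set $I$, Schwartz functions $A_i,B_i\in\mathcal{S}(F)$ ($i\in I$) and a constant $C>0$, depending on $\phi$, such that for all $a\in F^\times$ $$H(a)\le\sum_{i\in I}|A_i(a)|+\big|\log|a|\big|\sum_{i\in I}|B_i(a)|+C.$$ *)

theory Defs
  imports "HOL-Analysis.Analysis"
begin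

definition schwartz_R :: "(real \<Rightarrow> complex) \<Rightarrow> bool" where
  "schwartz_R f \<longleftrightarrow>
     (\<exists>D :: nat \<Rightarrow> real \<Rightarrow> complex.
        D 0 = f \<and>
        (\<forall>n x. (D n has_vector_derivative D (Suc n) x) (at x)) \<and>
        (\<forall>n k. \<exists>M. \<forall>x. \<bar>x\<bar> ^ k * norm (D n x) \<le> M))"

definition schwartz_R2 :: "(real \<times> real \<Rightarrow> complex) \<Rightarrow> bool" where
  "schwartz_R2 \<phi> \<longleftrightarrow>
     (\<exists>D :: nat \<Rightarrow> nat \<Rightarrow> real \<times> real \<Rightarrow> complex.
        D 0 0 = \<phi> \<and>
        (\<forall>i j. continuous_on UNIV (D i j)) \<and>
        (\<forall>i j x y. ((\<lambda>t. D i j (t, y)) has_vector_derivative D (Suc i) j (x, y)) (at x)) \<and>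
        (\<forall>i j x y. ((\<lambda>t. D i j (x, t)) has_vector_derivative D i (Suc j) (x, y)) (at y)) \<and>
        (\<forall>i j k l. \<exists>M. \<forall>x y. \<bar>x\<bar> ^ k * \<bar>y\<bar> ^ l * norm (D i j (x, y)) \<le> M))"

text \<open>H(a) = integral over R_+^x of |phi(a t, 1/t)| d^x t, with d^x t = dt / t.\<close>
definition H_R :: "(real \<times> real \<Rightarrow> complex) \<Rightarrow> real \<Rightarrow> ennreal" where
  "H_R \<phi> a = (\<integral>\<^sup>+ t \<in> {0<..}. ennreal (norm (\<phi> (a * t, 1 / t)) / t) \<partial>lborel)"

text \<open>A non-archimedean local field of characteristic zero: a field of characteristic 0
  with a normalized non-archimedean absolute value v, discretely valued with uniformizer
  \<open>\<pi>\<close>, complete, and with finite residue field of cardinality q, normalized so that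
  v \<pi> = 1/q.\<close>
definition nonarch_local_field :: "('a::field_char_0 \<Rightarrow> real) \<Rightarrow> 'a \<Rightarrow> bool" where
  "nonarch_local_field v \<pi> \<longleftrightarrow>
     (\<forall>x. 0 \<le> v x) \<and> (\<forall>x. v x = 0 \<longleftrightarrow> x = 0) \<and>
     (\<forall>x y. v (x * y) = v x * v y) \<and>
     (\<forall>x y. v (x + y) \<le> max (v x) (v y)) \<and>
     0 < v \<pi> \<and> v \<pi> < 1 \<and>
     (\<forall>x. x \<noteq> 0 \<longrightarrow> (\<exists>n::int. v x = v \<pi> powi n)) \<and>
     (\<forall>s :: nat \<Rightarrow> 'a. (\<forall>e>0. \<exists>N. \<forall>m\<ge>N. \<forall>n\<ge>N. v (s m - s n) < e) \<longrightarrow>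
          (\<exists>L. \<forall>e>0. \<exists>N. \<forall>n\<ge>N. v (s n - L) < e)) \<and>
     finite ((\<lambda>x. {y. v y \<le> 1 \<and> v (y - x) < 1}) ` {x. v x \<le> 1}) \<and>
     v \<pi> = 1 / real (card ((\<lambda>x. {y. v y \<le> 1 \<and> v (y - x) < 1}) ` {x. v x \<le> 1}))"

text \<open>Schwartz--Bruhat functions on F: locally constant with compact (= bounded) support.\<close>
definition nonarch_schwartz :: "('a::field_char_0 \<Rightarrow> real) \<Rightarrow> ('a \<Rightarrow> complex) \<Rightarrow> bool" where
  "nonarch_schwartz v f \<longleftrightarrow>
     (\<forall>x. \<exists>e>0. \<forall>y. v (y - x) < e \<longrightarrow> f y = f x) \<and>
     (\<exists>R. \<forall>x. R < v x \<longrightarrow> f x = 0)"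

definition nonarch_schwartz2 :: "('a::field_char_0 \<Rightarrow> real) \<Rightarrow> ('a \<times> 'a \<Rightarrow> complex) \<Rightarrow> bool" where
  "nonarch_schwartz2 v \<phi> \<longleftrightarrow>
     (\<forall>x y. \<exists>e>0. \<forall>x' y'. v (x' - x) < e \<and> v (y' - y) < e \<longrightarrow> \<phi> (x', y') = \<phi> (x, y)) \<and>
     (\<exists>R. \<forall>x y. R < max (v x) (v y) \<longrightarrow> \<phi> (x, y) = 0)"

definition H_na :: "'a::field_char_0 \<Rightarrow> ('a \<times> 'a \<Rightarrow> complex) \<Rightarrow> 'a \<Rightarrow> ennreal" where
  "H_na \<pi> \<phi> a = (\<integral>\<^sup>+ b. ennreal (norm (\<phi> (a * \<pi> powi b, \<pi> powi (- b)))) \<partial>count_space (UNIV :: int set))"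

end

theory Submission
  imports Defs "HOL-Computational_Algebra.Polynomial"
begin


lemma pow_fact_le_exp:
  fixes y :: real assumes "0 \<le> y" shows "y ^ m / fact m \<le> exp y"
proof -
  have S: "summable (\<lambda>n. inverse (fact n) * y ^ n)"
    using summable_exp_generic[of y] by (simp add: divide_inverse ac_simps)
  have "inverse (fact m) * y ^ m \<le> (\<Sum>n. inverse (fact n) * y ^ n)"
    using sum_le_suminf[OF S, of "{m}"] assms by auto
  then show ?thesis by (simp add: exp_def divide_inverse ac_simps)
qed

lemma abs_pow_exp_bound:
  fixes x :: real shows "\<bar>x\<bar> ^ m * exp (-(x^2)) \<le> fact m + 1"
proof (cases "\<bar>x\<bar> \<le> 1")
  case True
  have "\<bar>x\<bar> ^ m \<le> 1" using True by (simp add: power_le_one)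
  moreover have "exp (-(x^2)) \<le> 1" by simp
  ultimately have "\<bar>x\<bar> ^ m * exp (-(x^2)) \<le> 1"
    by (metis abs_ge_zero exp_ge_zero mult_le_one zero_le_power)
  moreover have "(0::real) \<le> fact m" by simp
  ultimately show ?thesis by linarith
next
  case False
  have "\<bar>x\<bar> ^ m \<le> \<bar>x\<bar> ^ (2*m)" using False by (intro power_increasing) auto
  also have "\<dots> = (x^2) ^ m" by (simp add: power_mult power2_abs)
  also have "\<dots> \<le> fact m * exp (x^2)"
    using pow_fact_le_exp[of "x^2" m] by (simp add: divide_le_eq mult.commute)
  finally have "\<bar>x\<bar> ^ m * exp (-(x^2)) \<le> fact m * exp (x^2) * exp (-(x^2))"
    by (simp add: mult_right_mono)
  also have "\<dots> = fact m" by (simp add: exp_minus)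
  finally show ?thesis by simp
qed

lemma poly_exp_bound:
  fixes p :: "real poly" shows "\<exists>M. \<forall>x::real. \<bar>x\<bar> ^ k * \<bar>poly p x\<bar> * exp (-(x^2)) \<le> M"
proof -
  define M where "M = (\<Sum>i\<le>degree p. \<bar>coeff p i\<bar> * (fact (i+k) + 1))"
  have "\<bar>x\<bar> ^ k * \<bar>poly p x\<bar> * exp (-(x^2)) \<le> M" for x
  proof -
    have "\<bar>poly p x\<bar> \<le> (\<Sum>i\<le>degree p. \<bar>coeff p i\<bar> * \<bar>x\<bar> ^ i)"
      unfolding poly_altdef by (rule order_trans[OF sum_abs]) (simp add: abs_mult power_abs)
    hence "\<bar>x\<bar> ^ k * \<bar>poly p x\<bar> * exp (-(x^2)) \<le> \<bar>x\<bar> ^ k * (\<Sum>i\<le>degree p. \<bar>coeff p i\<bar> * \<bar>x\<bar> ^ i) * exp (-(x^2))"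
      by (intro mult_right_mono mult_left_mono) auto
    also have "\<dots> = (\<Sum>i\<le>degree p. \<bar>coeff p i\<bar> * (\<bar>x\<bar> ^ (i+k) * exp (-(x^2))))"
      by (simp add: sum_distrib_left sum_distrib_right power_add algebra_simps)
    also have "\<dots> \<le> M" unfolding M_def
      by (intro sum_mono mult_left_mono abs_pow_exp_bound) auto
    finally show ?thesis .
  qed
  thus ?thesis by blast
qed


lemma gauss_schwartz: "schwartz_R (\<lambda>x. complex_of_real (c * exp (-(x^2))))"
proof -
  define P where "P = rec_nat [:c:] (\<lambda>n p. pderiv p - [:0,2:] * p)"
  have P0: "P 0 = [:c:]" and PS: "\<And>n. P (Suc n) = pderiv (P n) - [:0,2:] * P n"
    by (simp_all add: P_def)
  define D where "D = (\<lambda>n x. complex_of_real (poly (P n) x * exp (-(x^2))))"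
  have "D 0 = (\<lambda>x. complex_of_real (c * exp (-(x^2))))" by (simp add: D_def P0)
  moreover have "(D n has_vector_derivative D (Suc n) x) (at x)" for n x
  proof -
    have "((\<lambda>x. poly (P n) x * exp (-(x^2))) has_field_derivative
        (poly (pderiv (P n)) x * exp (-(x^2)) + poly (P n) x * (exp (-(x^2)) * (- (2 * x))))) (at x)"
      by (auto intro!: derivative_eq_intros poly_DERIV)
    moreover have "poly (pderiv (P n)) x * exp (-(x^2)) + poly (P n) x * (exp (-(x^2)) * (- (2 * x)))
        = poly (P (Suc n)) x * exp (-(x^2))"
      by (simp add: PS algebra_simps)
    ultimately show ?thesis unfolding D_def
      by (metis has_vector_derivative_of_real)
  qed
  moreover have "\<exists>M. \<forall>x. \<bar>x\<bar> ^ k * norm (D n x) \<le> M" for n k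
  proof -
    obtain M where "\<forall>x::real. \<bar>x\<bar> ^ k * \<bar>poly (P n) x\<bar> * exp (-(x^2)) \<le> M"
      using poly_exp_bound by blast
    hence "\<forall>x. \<bar>x\<bar> ^ k * norm (D n x) \<le> M"
      unfolding D_def norm_of_real by (simp add: abs_mult mult.assoc)
    thus ?thesis by blast
  qed
  ultimately show ?thesis unfolding schwartz_R_def by blast
qed


lemma zero_schwartz: "schwartz_R (\<lambda>x. 0)"
  unfolding schwartz_R_def by (rule exI[of _ "\<lambda>n x. 0"]) auto

lemma real_integral_bound:
  fixes N00 N02 N20 a :: real
  assumes a: "a \<noteq> 0" and N: "N00 \<ge> 0" "N02 \<ge> 0" "N20 \<ge> 0"
    and b00: "\<And>x y. norm (\<phi> (x, y)) \<le> N00"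
    and b02: "\<And>x y. y^2 * norm (\<phi> (x, y)) \<le> N02"
    and b20: "\<And>x y. x^2 * norm (\<phi> (x, y)) \<le> N20"
  defines "T \<equiv> max 1 (1 / \<bar>a\<bar>)"
  shows "H_R \<phi> a \<le> ennreal (N02 + N00 * ln T + N20 / a^2 * (T powr (-2) / 2))"
proof -
  have T1: "T \<ge> 1" by (simp add: T_def)
  define h where "h t = (if t \<in> {0..1} then N02 else 0) + (if t \<in> {1..T} then N00 / t else 0)
      + (if t \<in> {T..} then N20 / a^2 * t powr (-3) else 0)" for t :: real
  have h_nonneg: "h t \<ge> 0" for t
    unfolding h_def using N T1 by auto
  have i1: "((\<lambda>t::real. if t \<in> {0..1} then N02 else 0) has_integral N02) UNIV"
    unfolding has_integral_restrict_UNIV using has_integral_const_real[of N02 0 1] by simp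
  have "((\<lambda>t. N00 / t) has_integral (N00 * ln T - N00 * ln 1)) {1..T}"
  proof (rule fundamental_theorem_of_calculus)
    show "1 \<le> T" by (rule T1)
    fix x assume "x \<in> {1..T}"
    then have "x > 0" by auto
    then show "((\<lambda>t. N00 * ln t) has_vector_derivative N00 / x) (at x within {1..T})"
      by (auto intro!: derivative_eq_intros simp: has_real_derivative_iff_has_vector_derivative[symmetric] field_simps)
  qed
  then have i2: "((\<lambda>t. if t \<in> {1..T} then N00 / t else 0) has_integral (N00 * ln T)) UNIV"
    unfolding has_integral_restrict_UNIV by simp
  have "((\<lambda>t. t powr (-3)) has_integral (T powr (-2) / 2)) {T..}"
    using has_integral_powr_to_inf[of "-3" T] T1 by simp
  then have "((\<lambda>t. N20 / a^2 * t powr (-3)) has_integral (N20 / a^2 * (T powr (-2) / 2))) {T..}"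
    by (rule has_integral_mult_right)
  then have i3: "((\<lambda>t. if t \<in> {T..} then N20 / a^2 * t powr (-3) else 0) has_integral (N20 / a^2 * (T powr (-2) / 2))) UNIV"
    unfolding has_integral_restrict_UNIV by simp
  have ih: "(h has_integral (N02 + N00 * ln T + N20 / a^2 * (T powr (-2) / 2))) UNIV"
    unfolding h_def by (intro has_integral_add i1 i2 i3)
  have eq: "(\<integral>\<^sup>+ t. ennreal (h t) \<partial>lborel) = ennreal (N02 + N00 * ln T + N20 / a^2 * (T powr (-2) / 2))"
    using nn_integral_has_integral_lebesgue[OF _ ih] h_nonneg by simp
  have pw: "ennreal (norm (\<phi> (a * t, 1 / t)) / t) * indicator {0<..} t \<le> ennreal (h t)" for t
  proof (cases "t > 0")
    case False then show ?thesis by simp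
  next
    case True
    let ?f = "norm (\<phi> (a * t, 1 / t))"
    have "?f / t \<le> h t"
    proof -
      have pieces: "h t \<ge> (if t \<in> {0..1} then N02 else 0)" "h t \<ge> (if t \<in> {1..T} then N00 / t else 0)"
        "h t \<ge> (if t \<in> {T..} then N20 / a^2 * t powr (-3) else 0)"
        unfolding h_def using N T1 True by auto
      consider "t \<le> 1" | "1 \<le> t \<and> t \<le> T" | "T \<le> t" by linarith
      then show ?thesis
      proof cases
        case 1
        have "(1/t)^2 * ?f \<le> N02" by (rule b02)
        then have "?f \<le> N02 * t^2" using True by (simp add: field_simps power2_eq_square)
        then have "?f / t \<le> N02 * t" using True by (simp add: divide_le_eq power2_eq_square mult.assoc)
        also have "\<dots> \<le> N02" using 1 N by (simp add: mult_left_le)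
        finally show ?thesis using pieces(1) 1 True by auto
      next
        case 2
        have "?f / t \<le> N00 / t" using b00 True by (simp add: divide_right_mono)
        then show ?thesis using pieces(2) 2 by auto
      next
        case 3
        have "(a*t)^2 * ?f \<le> N20" by (rule b20)
        moreover have "(a*t)^2 > 0" using True a by simp
        ultimately have "?f \<le> N20 / (a*t)^2" by (simp add: pos_le_divide_eq mult.commute)
        then have "?f / t \<le> N20 / (a*t)^2 / t" using True by (intro divide_right_mono) auto
        also have "\<dots> = N20 / a^2 / t^3" by (simp add: power_mult_distrib power3_eq_cube power2_eq_square)
        finally have "?f / t \<le> N20 / a^2 / t^3" .
        also have "\<dots> = N20 / a^2 * t powr (-3)" using True
          by (simp add: powr_minus powr_realpow divide_inverse)
        finally show ?thesis using pieces(3) 3 by auto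
      qed
    qed
    then show ?thesis using True by (simp add: ennreal_leI)
  qed
  have "H_R \<phi> a = (\<integral>\<^sup>+ t. ennreal (norm (\<phi> (a * t, 1 / t)) / t) * indicator {0<..} t \<partial>lborel)"
    unfolding H_R_def by simp
  also have "\<dots> \<le> (\<integral>\<^sup>+ t. ennreal (h t) \<partial>lborel)"
    by (intro nn_integral_mono pw)
  finally show ?thesis using eq by simp
qed


lemma real_part:
  assumes "schwartz_R2 \<phi>"
  shows "\<exists>I :: nat set. \<exists>A B :: nat \<Rightarrow> real \<Rightarrow> complex. \<exists>C :: real.
         finite I \<and> (\<forall>i\<in>I. schwartz_R (A i) \<and> schwartz_R (B i)) \<and> C > 0 \<and>
         (\<forall>a::real. a \<noteq> 0 \<longrightarrow>
            H_R \<phi> a \<le> ennreal ((\<Sum>i\<in>I. norm (A i a))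
                                 + \<bar>ln \<bar>a\<bar>\<bar> * (\<Sum>i\<in>I. norm (B i a)) + C))"
proof -
  obtain D :: "nat \<Rightarrow> nat \<Rightarrow> real \<times> real \<Rightarrow> complex" where D0: "D 0 0 = \<phi>" and Db: "\<And>i j k l. \<exists>M. \<forall>x y. \<bar>x\<bar> ^ k * \<bar>y\<bar> ^ l * norm (D i j (x, y)) \<le> M"
    using assms unfolding schwartz_R2_def by blast
  obtain M00 where M00: "\<And>x y. norm (\<phi> (x, y)) \<le> M00" using Db[where i=0 and j=0 and k=0 and l=0] D0 by auto
  obtain M02 where M02: "\<And>x y. y^2 * norm (\<phi> (x, y)) \<le> M02" using Db[where i=0 and j=0 and k=0 and l=2] D0 by (auto simp: power2_abs)
  obtain M20 where M20: "\<And>x y. x^2 * norm (\<phi> (x, y)) \<le> M20" using Db[where i=0 and j=0 and k=2 and l=0] D0 by (auto simp: power2_abs)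
  have N: "M00 \<ge> 0" "M02 \<ge> 0" "M20 \<ge> 0"
    using M00[of 0 0] M02[of 0 0] M20[of 0 0] norm_ge_zero[of "\<phi> (0,0)"] by (simp_all del: norm_ge_zero)
  define A :: "nat \<Rightarrow> real \<Rightarrow> complex" where "A = (\<lambda>i x. 0)"
  define B :: "nat \<Rightarrow> real \<Rightarrow> complex" where "B = (\<lambda>i x. complex_of_real (M00 * exp 1 * exp (-(x^2))))"
  define C where "C = M02 + M20 + 1"
  have "H_R \<phi> a \<le> ennreal ((\<Sum>i\<in>{0}. norm (A i a)) + \<bar>ln \<bar>a\<bar>\<bar> * (\<Sum>i\<in>{0}. norm (B i a)) + C)"
    if a: "a \<noteq> 0" for a
  proof -
    define T where "T = max 1 (1 / \<bar>a\<bar>)"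
    have T1: "T \<ge> 1" by (simp add: T_def)
    have "H_R \<phi> a \<le> ennreal (M02 + M00 * ln T + M20 / a^2 * (T powr (-2) / 2))"
      unfolding T_def by (rule real_integral_bound[OF a N M00 M02 M20])
    also have "M02 + M00 * ln T + M20 / a^2 * (T powr (-2) / 2) \<le>
        (\<Sum>i\<in>{0}. norm (A i a)) + \<bar>ln \<bar>a\<bar>\<bar> * (\<Sum>i\<in>{0}. norm (B i a)) + C"
    proof -
      have "T^2 \<ge> (1/\<bar>a\<bar>)^2" unfolding T_def by (intro power_mono) auto
      then have "T^2 \<ge> 1 / a^2" by (simp add: power_divide)
      then have Tp: "T powr (-2) \<le> a^2" using T1 a
        by (simp add: powr_minus powr_realpow field_simps)
      have "M20 / a^2 * (T powr (-2) / 2) \<le> M20 / a^2 * (a^2 / 2)"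
        using Tp N a by (intro mult_left_mono) auto
      also have "\<dots> \<le> M20" using a N by simp
      finally have t3: "M20 / a^2 * (T powr (-2) / 2) \<le> M20" .
      have t2: "M00 * ln T \<le> \<bar>ln \<bar>a\<bar>\<bar> * (M00 * exp 1 * exp (-(a^2)))"
      proof (cases "\<bar>a\<bar> \<ge> 1")
        case True
        then have "T = 1" unfolding T_def by (simp add: divide_le_eq_1)
        then show ?thesis using N by simp
      next
        case False
        then have "T = 1 / \<bar>a\<bar>" unfolding T_def using a by (simp add: le_divide_eq_1)
        then have lnT: "ln T = \<bar>ln \<bar>a\<bar>\<bar>" using False a by (simp add: ln_div)
        have "exp 1 * exp (-(a^2)) = exp (1 - a^2)" by (simp add: exp_diff exp_minus field_simps)
        also have "\<dots> \<ge> 1" using False by (simp add: abs_square_le_1)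
        finally have "M00 \<le> M00 * exp 1 * exp (-(a^2))" using N
          by (metis mult.assoc mult_left_mono mult.right_neutral)
        then show ?thesis unfolding lnT by (metis abs_ge_zero mult_left_mono mult.commute)
      qed
      have nB: "norm (B 0 a) = M00 * exp 1 * exp (-(a^2))"
        unfolding B_def norm_of_real using N by simp
      show ?thesis using t2 t3 N nB by (simp add: A_def C_def)
    qed
    then have "ennreal (M02 + M00 * ln T + M20 / a^2 * (T powr (-2) / 2)) \<le>
        ennreal ((\<Sum>i\<in>{0}. norm (A i a)) + \<bar>ln \<bar>a\<bar>\<bar> * (\<Sum>i\<in>{0}. norm (B i a)) + C)"
      by (rule ennreal_leI)
    finally show ?thesis .
  qed
  moreover have "\<forall>i\<in>{0::nat}. schwartz_R (A i) \<and> schwartz_R (B i)"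
    unfolding A_def B_def using zero_schwartz gauss_schwartz[of "M00 * exp 1"] by (simp del: of_real_mult)
  moreover have "C > 0" using N by (simp add: C_def)
  ultimately show ?thesis by (intro exI[of _ "{0::nat}"] exI[of _ A] exI[of _ B] exI[of _ C]) auto
qed




lemma powi_le_iff:
  fixes r :: real assumes "0 < r" "r < 1"
  shows "r powi i \<le> r powi j \<longleftrightarrow> j \<le> i"
proof
  assume h: "r powi i \<le> r powi j"
  show "j \<le> i"
  proof (rule ccontr)
    assume "\<not> j \<le> i"
    then have "r powi j < r powi i" using assms by (intro power_int_strict_decreasing) auto
    with h show False by simp
  qed
next
  assume "j \<le> i" then show "r powi i \<le> r powi j"
    using assms by (intro power_int_decreasing) auto
qed

context
  fixes v :: "'a::field_char_0 \<Rightarrow> real" and \<pi> :: 'a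
  assumes nlf: "nonarch_local_field v \<pi>"
begin

lemma nlf_all: "(\<forall>x. 0 \<le> v x) \<and> (\<forall>x. v x = 0 \<longleftrightarrow> x = 0) \<and>
     (\<forall>x y. v (x * y) = v x * v y) \<and>
     (\<forall>x y. v (x + y) \<le> max (v x) (v y)) \<and>
     0 < v \<pi> \<and> v \<pi> < 1 \<and>
     (\<forall>x. x \<noteq> 0 \<longrightarrow> (\<exists>n::int. v x = v \<pi> powi n)) \<and>
     (\<forall>s :: nat \<Rightarrow> 'a. (\<forall>e>0. \<exists>N. \<forall>m\<ge>N. \<forall>n\<ge>N. v (s m - s n) < e) \<longrightarrow>
          (\<exists>L. \<forall>e>0. \<exists>N. \<forall>n\<ge>N. v (s n - L) < e)) \<and>
     finite ((\<lambda>x. {y. v y \<le> 1 \<and> v (y - x) < 1}) ` {x. v x \<le> 1}) \<and>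
     v \<pi> = 1 / real (card ((\<lambda>x. {y. v y \<le> 1 \<and> v (y - x) < 1}) ` {x. v x \<le> 1}))"
  using nlf unfolding nonarch_local_field_def by assumption

lemmas v_nonneg = nlf_all[THEN conjunct1, rule_format]
lemmas v_eq0 = nlf_all[THEN conjunct2, THEN conjunct1, rule_format]
lemmas v_mult = nlf_all[THEN conjunct2, THEN conjunct2, THEN conjunct1, rule_format]
lemmas v_ultra = nlf_all[THEN conjunct2, THEN conjunct2, THEN conjunct2, THEN conjunct1, rule_format]
lemmas rho1 = nlf_all[THEN conjunct2, THEN conjunct2, THEN conjunct2, THEN conjunct2, THEN conjunct1, rule_format]
lemmas rho2 = nlf_all[THEN conjunct2, THEN conjunct2, THEN conjunct2, THEN conjunct2, THEN conjunct2, THEN conjunct1, rule_format]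
lemmas v_disc = nlf_all[THEN conjunct2, THEN conjunct2, THEN conjunct2, THEN conjunct2, THEN conjunct2, THEN conjunct2, THEN conjunct1, rule_format]
lemmas v_compl = nlf_all[THEN conjunct2, THEN conjunct2, THEN conjunct2, THEN conjunct2, THEN conjunct2, THEN conjunct2, THEN conjunct2, THEN conjunct1, rule_format]
lemmas v_fin = nlf_all[THEN conjunct2, THEN conjunct2, THEN conjunct2, THEN conjunct2, THEN conjunct2, THEN conjunct2, THEN conjunct2, THEN conjunct2, THEN conjunct1, rule_format]
lemmas rho = rho1 rho2

lemma v0[simp]: "v 0 = 0" using v_eq0[of 0] by simp

lemma pi_ne0: "\<pi> \<noteq> 0" using rho v_eq0 by force

lemma v_one: "v 1 = 1"
proof -
  have "v 1 = v 1 * v 1" using v_mult[of 1 1] by simp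
  moreover have "v 1 \<noteq> 0" using v_eq0 by simp
  ultimately show ?thesis by (metis mult_cancel_right1)
qed

lemma v_minus: "v (- x) = v x"
proof -
  have "v (-1) * v (-1) = 1" using v_mult[of "-1" "-1"] v_one by simp
  then have "(v (-1) - 1) * (v (-1) + 1) = 0" by (simp add: algebra_simps)
  moreover have "v (-1) + 1 \<noteq> 0" using v_nonneg[of "-1"] by linarith
  ultimately have "v (-1) = 1" by simp
  then show ?thesis using v_mult[of "-1" x] by simp
qed

lemma v_sym: "v (x - y) = v (y - x)"
  using v_minus[of "x - y"] by simp

lemma v_tri: "v (x - z) \<le> max (v (x - y)) (v (y - z))"
  using v_ultra[of "x - y" "y - z"] by simp

lemma v_inverse: "v (inverse x) = inverse (v x)"
proof (cases "x = 0")
  case False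
  then have xi: "x * inverse x = 1" by (rule right_inverse)
  have "v x * v (inverse x) = 1" using v_mult[of x "inverse x"] v_one unfolding xi by simp
  then show ?thesis using inverse_unique[of "v x" "v (inverse x)"] by simp
qed (use v_eq0[of 0] in simp)

lemma v_power: "v (x ^ n) = v x ^ n"
  by (induction n) (simp_all add: v_one v_mult)

lemma v_powi: "v (x powi n) = v x powi n"
proof (cases "n \<ge> 0")
  case True
  define m where "m = nat n"
  have "n = int m" using True by (simp add: m_def)
  then show ?thesis by (simp add: v_power)
next
  case False
  define m where "m = nat (- n)"
  have "n = - int m" using False by (simp add: m_def)
  then show ?thesis by (simp add: power_int_minus v_inverse v_power)
qed

lemma v_lt1: "v z < 1 \<Longrightarrow> v z \<le> v \<pi>"
proof (cases "z = 0")
  case True then show ?thesis using v_eq0 rho by simp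
next
  case False
  assume h: "v z < 1"
  obtain n where n: "v z = v \<pi> powi n" using v_disc[OF False] by blast
  have "\<not> n \<le> 0"
  proof
    assume "n \<le> 0"
    then have "v \<pi> powi 0 \<le> v \<pi> powi n" using powi_le_iff[OF rho, of 0 n] by simp
    with h n show False by simp
  qed
  then have "v \<pi> powi n \<le> v \<pi> powi 1" using powi_le_iff[OF rho, of n 1] by simp
  with n show ?thesis by simp
qed

lemma v_strict: "v (y - x) < v x \<Longrightarrow> v y = v x"
proof -
  assume h: "v (y - x) < v x"
  have "v y \<le> max (v (y - x)) (v x)" using v_ultra[of "y - x" x] by simp
  moreover have "v x \<le> max (v (x - y)) (v y)" using v_ultra[of "x - y" y] by simp
  ultimately show ?thesis using h v_sym[of x y] by (auto simp: max_def split: if_splits)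
qed

lemma cover:
  "\<exists>S. finite S \<and> (\<forall>d\<in>S. v (d - c) \<le> v \<pi> powi k) \<and>
       (\<forall>x. v (x - c) \<le> v \<pi> powi k \<longrightarrow> (\<exists>d\<in>S. v (x - d) \<le> v \<pi> powi (k + 1)))"
proof -
  define cls where "cls = (\<lambda>x. {y. v y \<le> 1 \<and> v (y - x) < 1})"
  define Cl where "Cl = cls ` {x. v x \<le> 1}"
  have finCl: "finite Cl" using v_fin unfolding Cl_def cls_def .
  define r where "r K = (SOME x. v x \<le> 1 \<and> K = cls x)" for K
  have r: "v (r K) \<le> 1 \<and> K = cls (r K)" if "K \<in> Cl" for K
    unfolding r_def using that unfolding Cl_def by (rule imageE) (rule someI, blast)
  define S where "S = (\<lambda>K. c + \<pi> powi k * r K) ` Cl"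
  have pk: "v (\<pi> powi k) = v \<pi> powi k" by (rule v_powi)
  have pkpos: "v \<pi> powi k > 0" using rho by simp
  have "finite S" unfolding S_def using finCl by simp
  moreover have "\<forall>d\<in>S. v (d - c) \<le> v \<pi> powi k"
  proof
    fix d assume "d \<in> S"
    then obtain K where K: "K \<in> Cl" "d = c + \<pi> powi k * r K" unfolding S_def by blast
    have "v (d - c) = v \<pi> powi k * v (r K)" using K by (simp add: v_mult pk)
    also have "\<dots> \<le> v \<pi> powi k" using r[OF K(1)] pkpos by (simp add: mult_left_le)
    finally show "v (d - c) \<le> v \<pi> powi k" .
  qed
  moreover have "\<exists>d\<in>S. v (x - d) \<le> v \<pi> powi (k + 1)" if x: "v (x - c) \<le> v \<pi> powi k" for x
  proof -
    define u where "u = (x - c) / \<pi> powi k"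
    have pk0: "\<pi> powi k \<noteq> 0" using pi_ne0 by simp
    have xu: "x - c = \<pi> powi k * u" unfolding u_def using pk0 by simp
    have "v (x - c) = v \<pi> powi k * v u" using xu by (simp add: v_mult pk)
    then have vu: "v u \<le> 1" using x pkpos by (simp add: mult_le_cancel_left1)
    define K where "K = cls u"
    have KCl: "K \<in> Cl" unfolding K_def Cl_def using vu by blast
    have "u \<in> K" unfolding K_def cls_def using vu v_eq0 by simp
    then have "u \<in> cls (r K)" using r[OF KCl] by simp
    then have "v (u - r K) < 1" unfolding cls_def by simp
    then have lt: "v (u - r K) \<le> v \<pi>" by (rule v_lt1)
    have "x - (c + \<pi> powi k * r K) = \<pi> powi k * (u - r K)" using xu by (simp add: algebra_simps)
    then have "v (x - (c + \<pi> powi k * r K)) = v \<pi> powi k * v (u - r K)" by (simp add: v_mult pk)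
    also have "\<dots> \<le> v \<pi> powi k * v \<pi>" using lt pkpos by simp
    also have "\<dots> = v \<pi> powi (k + 1)" using rho by (simp add: power_int_add)
    finally show ?thesis unfolding S_def using KCl by blast
  qed
  ultimately show ?thesis by blast
qed

lemma small_pow: "e > 0 \<Longrightarrow> \<exists>N::nat. \<forall>n\<ge>N. v \<pi> powi (k + int n) < e"
proof -
  assume e: "e > 0"
  have pk: "v \<pi> powi k > 0" using rho by simp
  obtain N where N: "v \<pi> ^ N < e / v \<pi> powi k"
    using real_arch_pow_inv[of "e / v \<pi> powi k" "v \<pi>"] e pk rho by auto
  have "v \<pi> powi (k + int n) < e" if "n \<ge> N" for n
  proof -
    have "v \<pi> powi (k + int n) \<le> v \<pi> powi (k + int N)"
      using powi_le_iff[OF rho] that by simp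
    also have "\<dots> = v \<pi> powi k * v \<pi> ^ N" using rho by (simp add: power_int_add)
    also have "\<dots> < e" using N pk by (simp add: pos_less_divide_eq mult.commute)
    finally show ?thesis .
  qed
  then show ?thesis by blast
qed

lemma seq_limit:
  assumes st: "\<And>n. v (t (Suc n) - t n) \<le> v \<pi> powi (k + int n)"
  shows "\<exists>L. \<forall>n. v (t n - L) \<le> v \<pi> powi (k + int n)"
proof -
  have cau: "v (t m - t n) \<le> v \<pi> powi (k + int n)" if "n \<le> m" for n m
    using that
  proof (induction m rule: dec_induct)
    case base then show ?case using v_eq0[of 0] rho by simp
  next
    case (step m)
    have "v (t (Suc m) - t n) \<le> max (v (t (Suc m) - t m)) (v (t m - t n))" by (rule v_tri)
    moreover have "v (t (Suc m) - t m) \<le> v \<pi> powi (k + int n)"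
      using st[of m] powi_le_iff[OF rho, of "k + int m" "k + int n"] step(1) by simp
    ultimately show ?case using step(3) by simp
  qed
  have "\<forall>e>0. \<exists>N. \<forall>m\<ge>N. \<forall>n\<ge>N. v (t m - t n) < e"
  proof (intro allI impI)
    fix e :: real assume "e > 0"
    then obtain N where N: "\<forall>n\<ge>N. v \<pi> powi (k + int n) < e" using small_pow by blast
    have "v (t m - t n) < e" if "m \<ge> N" "n \<ge> N" for m n
    proof (cases "n \<le> m")
      case True
      have "v (t m - t n) \<le> v \<pi> powi (k + int n)" using cau[OF True] .
      moreover have "v \<pi> powi (k + int n) < e" using N that(2) by blast
      ultimately show ?thesis by linarith
    next
      case False
      then have "v (t n - t m) \<le> v \<pi> powi (k + int m)" using cau by simp
      moreover have "v \<pi> powi (k + int m) < e" using N that(1) by blast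
      ultimately show ?thesis using v_sym[of "t m" "t n"] by linarith
    qed
    then show "\<exists>N. \<forall>m\<ge>N. \<forall>n\<ge>N. v (t m - t n) < e" by blast
  qed
  then obtain L where L: "\<forall>e>0. \<exists>N. \<forall>n\<ge>N. v (t n - L) < e" using v_compl by blast
  have "v (t n - L) \<le> v \<pi> powi (k + int n)" for n
  proof (rule ccontr)
    assume h: "\<not> ?thesis"
    define e where "e = v (t n - L)"
    have "v \<pi> powi (k + int n) > 0" using rho(1) by simp
    then have "e > 0" using h unfolding e_def by linarith
    then obtain N where N: "\<forall>m\<ge>N. v (t m - L) < e" using L by blast
    define m where "m = max N n"
    have "v (t n - L) \<le> max (v (t n - t m)) (v (t m - L))" by (rule v_tri)
    moreover have "v (t n - t m) \<le> v \<pi> powi (k + int n)"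
    proof -
      have "n \<le> m" by (simp add: m_def)
      then have "v (t m - t n) \<le> v \<pi> powi (k + int n)" by (rule cau)
      then show ?thesis using v_sym[of "t n" "t m"] by simp
    qed
    moreover have "v (t m - L) < e" using N by (simp add: m_def)
    ultimately show False using h unfolding e_def by linarith
  qed
  then show ?thesis by blast
qed

lemma bounded_box:
  fixes f :: "'a \<times> 'a \<Rightarrow> complex"
  assumes lc: "\<forall>x y. \<exists>e>0. \<forall>x' y'. v (x' - x) < e \<and> v (y' - y) < e \<longrightarrow> f (x', y') = f (x, y)"
  shows "\<exists>M. \<forall>x y. v (x - c1) \<le> v \<pi> powi k \<and> v (y - c2) \<le> v \<pi> powi k \<longrightarrow> norm (f (x, y)) \<le> M"
proof (rule ccontr)
  define Bd where "Bd c1 c2 j \<longleftrightarrow> (\<exists>M. \<forall>x y. v (x - c1) \<le> v \<pi> powi j \<and> v (y - c2) \<le> v \<pi> powi j \<longrightarrow> norm (f (x, y)) \<le> M)"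
    for c1 c2 j
  assume "\<not> (\<exists>M. \<forall>x y. v (x - c1) \<le> v \<pi> powi k \<and> v (y - c2) \<le> v \<pi> powi k \<longrightarrow> norm (f (x, y)) \<le> M)"
  then have nb0: "\<not> Bd c1 c2 k" unfolding Bd_def .
  define st where "st j p q \<longleftrightarrow> v (fst q - fst p) \<le> v \<pi> powi j \<and> v (snd q - snd p) \<le> v \<pi> powi j
      \<and> \<not> Bd (fst q) (snd q) (j + 1)" for j and p q :: "'a \<times> 'a"
  have step: "\<exists>q. st j p q" if nb: "\<not> Bd (fst p) (snd p) j" for j p
  proof (rule ccontr)
    assume nq: "\<not> (\<exists>q. st j p q)"
    obtain S1 where S1: "finite S1" "\<forall>d\<in>S1. v (d - fst p) \<le> v \<pi> powi j"
       "\<forall>x. v (x - fst p) \<le> v \<pi> powi j \<longrightarrow> (\<exists>d\<in>S1. v (x - d) \<le> v \<pi> powi (j + 1))"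
      using cover[where c="fst p" and k=j] by blast
    obtain S2 where S2: "finite S2" "\<forall>d\<in>S2. v (d - snd p) \<le> v \<pi> powi j"
       "\<forall>x. v (x - snd p) \<le> v \<pi> powi j \<longrightarrow> (\<exists>d\<in>S2. v (x - d) \<le> v \<pi> powi (j + 1))"
      using cover[where c="snd p" and k=j] by blast
    have "\<forall>q\<in>S1 \<times> S2. Bd (fst q) (snd q) (j + 1)"
    proof
      fix q assume q: "q \<in> S1 \<times> S2"
      show "Bd (fst q) (snd q) (j + 1)"
      proof (rule ccontr)
        assume "\<not> Bd (fst q) (snd q) (j + 1)"
        moreover have "v (fst q - fst p) \<le> v \<pi> powi j" using S1(2) q by (simp add: mem_Times_iff)
        moreover have "v (snd q - snd p) \<le> v \<pi> powi j" using S2(2) q by (simp add: mem_Times_iff)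
        ultimately have "st j p q" unfolding st_def by blast
        with nq show False by blast
      qed
    qed
    then have "\<forall>q\<in>S1 \<times> S2. \<exists>M. \<forall>x y. v (x - fst q) \<le> v \<pi> powi (j+1) \<and> v (y - snd q) \<le> v \<pi> powi (j+1)
        \<longrightarrow> norm (f (x, y)) \<le> M" unfolding Bd_def by blast
    then have "\<exists>Mf. \<forall>q\<in>S1 \<times> S2. \<forall>x y. v (x - fst q) \<le> v \<pi> powi (j+1) \<and> v (y - snd q) \<le> v \<pi> powi (j+1)
        \<longrightarrow> norm (f (x, y)) \<le> Mf q" by (rule bchoice)
    then obtain Mf where Mf: "\<forall>q\<in>S1 \<times> S2. \<forall>x y. v (x - fst q) \<le> v \<pi> powi (j+1) \<and> v (y - snd q) \<le> v \<pi> powi (j+1)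
        \<longrightarrow> norm (f (x, y)) \<le> Mf q" by blast
    define M where "M = (\<Sum>q\<in>S1 \<times> S2. \<bar>Mf q\<bar>)"
    have "norm (f (x, y)) \<le> M" if hx: "v (x - fst p) \<le> v \<pi> powi j" and hy: "v (y - snd p) \<le> v \<pi> powi j" for x y
    proof -
      obtain d1 where d1: "d1 \<in> S1" "v (x - d1) \<le> v \<pi> powi (j + 1)" using S1(3) hx by blast
      obtain d2 where d2: "d2 \<in> S2" "v (y - d2) \<le> v \<pi> powi (j + 1)" using S2(3) hy by blast
      have "norm (f (x, y)) \<le> Mf (d1, d2)" using Mf d1 d2 by auto
      also have "\<dots> \<le> \<bar>Mf (d1, d2)\<bar>" by simp
      also have "\<dots> \<le> M" unfolding M_def
        by (rule member_le_sum) (use d1 d2 S1 S2 in auto)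
      finally show ?thesis .
    qed
    then have "Bd (fst p) (snd p) j" unfolding Bd_def by blast
    with nb show False by simp
  qed
  define s where "s = rec_nat (c1, c2) (\<lambda>n p. SOME q. st (k + int n) p q)"
  have s0: "s 0 = (c1, c2)" and sS: "\<And>n. s (Suc n) = (SOME q. st (k + int n) (s n) q)"
    by (simp_all add: s_def)
  have nbn: "\<not> Bd (fst (s n)) (snd (s n)) (k + int n)" for n
  proof (induction n)
    case 0 then show ?case using nb0 s0 by simp
  next
    case (Suc n)
    have "st (k + int n) (s n) (s (Suc n))" unfolding sS by (rule someI_ex) (rule step[OF Suc])
    moreover have "k + int n + 1 = k + int (Suc n)" by simp
    ultimately show ?case unfolding st_def by metis
  qed
  have stn: "st (k + int n) (s n) (s (Suc n))" for n
    unfolding sS by (rule someI_ex) (rule step[OF nbn])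
  obtain L1 where L1: "\<forall>n. v (fst (s n) - L1) \<le> v \<pi> powi (k + int n)"
    using seq_limit[of "\<lambda>n. fst (s n)" k] stn unfolding st_def by blast
  obtain L2 where L2: "\<forall>n. v (snd (s n) - L2) \<le> v \<pi> powi (k + int n)"
    using seq_limit[of "\<lambda>n. snd (s n)" k] stn unfolding st_def by blast
  obtain e where e: "e > 0" "\<forall>x' y'. v (x' - L1) < e \<and> v (y' - L2) < e \<longrightarrow> f (x', y') = f (L1, L2)"
    using lc[rule_format, of L1 L2] by blast
  obtain N where N: "\<forall>n\<ge>N. v \<pi> powi (k + int n) < e" using small_pow[OF e(1)] by blast
  have "Bd (fst (s N)) (snd (s N)) (k + int N)" unfolding Bd_def
  proof (intro exI allI impI)
    fix x y assume h: "v (x - fst (s N)) \<le> v \<pi> powi (k + int N) \<and> v (y - snd (s N)) \<le> v \<pi> powi (k + int N)"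
    have tx: "v (x - L1) \<le> max (v (x - fst (s N))) (v (fst (s N) - L1))" by (rule v_tri)
    have ty: "v (y - L2) \<le> max (v (y - snd (s N))) (v (snd (s N) - L2))" by (rule v_tri)
    have l1: "v (fst (s N) - L1) \<le> v \<pi> powi (k + int N)" using L1 by blast
    have l2: "v (snd (s N) - L2) \<le> v \<pi> powi (k + int N)" using L2 by blast
    have nn: "v \<pi> powi (k + int N) < e" using N by blast
    have "v (x - L1) < e" using tx l1 nn h by linarith
    moreover have "v (y - L2) < e" using ty l2 nn h by linarith
    ultimately have "f (x, y) = f (L1, L2)" using e(2) by blast
    then show "norm (f (x, y)) \<le> norm (f (L1, L2))" by simp
  qed
  with nbn show False by blast
qed

lemma powi_less_iff: "v \<pi> powi i < v \<pi> powi j \<longleftrightarrow> j < i"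
  using powi_le_iff[OF rho, of j i] by linarith

lemma ln_powi: "ln (v \<pi> powi n) = of_int n * ln (v \<pi>)"
proof -
  have "v \<pi> powi n = exp (ln (v \<pi>)) powi n" using rho by simp
  also have "\<dots> = exp (of_int n * ln (v \<pi>))" by (rule exp_power_int)
  finally show ?thesis by simp
qed

lemma big_pow: "\<exists>K::nat. R < v \<pi> powi (- int K)"
proof -
  have "1 < 1 / v \<pi>" using rho by simp
  then obtain K where K: "R < (1 / v \<pi>) ^ K" using real_arch_pow by blast
  have "v \<pi> powi (- int K) = (1 / v \<pi>) ^ K" by (simp add: power_int_minus power_one_over inverse_eq_divide)
  with K have "R < v \<pi> powi (- int K)" by simp
  then show ?thesis by blast
qed

lemma phi_bounded:
  assumes "nonarch_schwartz2 v \<phi>"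
  shows "\<exists>M\<ge>0. \<forall>x y. norm (\<phi> (x, y)) \<le> M"
proof -
  have lc: "\<forall>x y. \<exists>e>0. \<forall>x' y'. v (x' - x) < e \<and> v (y' - y) < e \<longrightarrow> \<phi> (x', y') = \<phi> (x, y)"
    and "\<exists>R. \<forall>x y. R < max (v x) (v y) \<longrightarrow> \<phi> (x, y) = 0"
    using assms unfolding nonarch_schwartz2_def by blast+
  then obtain R where R: "\<forall>x y. R < max (v x) (v y) \<longrightarrow> \<phi> (x, y) = 0" by blast
  obtain K where K: "R < v \<pi> powi (- int K)" using big_pow by blast
  obtain M where M: "\<forall>x y. v (x - 0) \<le> v \<pi> powi (- int K) \<and> v (y - 0) \<le> v \<pi> powi (- int K) \<longrightarrow> norm (\<phi> (x, y)) \<le> M"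
    using bounded_box[OF lc, of 0 "- int K" 0] by blast
  have "norm (\<phi> (x, y)) \<le> max M 0" for x y
  proof (cases "R < max (v x) (v y)")
    case True then show ?thesis using R by simp
  next
    case False
    then have "v x \<le> v \<pi> powi (- int K)" "v y \<le> v \<pi> powi (- int K)" using K by auto
    then show ?thesis using M by fastforce
  qed
  then show ?thesis by (intro exI[of _ "max M 0"]) auto
qed

lemma ball_ind_schwartz:
  assumes r: "r > 0"
  shows "nonarch_schwartz v (\<lambda>x. if v x \<le> r then c else 0)"
  unfolding nonarch_schwartz_def
proof (intro conjI allI)
  fix x
  show "\<exists>e>0. \<forall>y. v (y - x) < e \<longrightarrow> (if v y \<le> r then c else 0) = (if v x \<le> r then c else 0)"
  proof (cases "v x \<le> r")
    case True
    have "v y \<le> r" if "v (y - x) < r" for y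
      using v_ultra[of "y - x" x] that True by simp
    then have "(if v y \<le> r then c else 0) = (if v x \<le> r then c else 0)" if "v (y - x) < r" for y
      using that True by simp
    then show ?thesis using r by blast
  next
    case False
    have vx: "v x > 0" using False r by simp
    have "(if v y \<le> r then c else 0) = (if v x \<le> r then c else 0)" if "v (y - x) < v x" for y
    proof -
      have "v y = v x" using v_strict that by blast
      then show ?thesis by simp
    qed
    then show ?thesis using vx by blast
  qed
next
  show "\<exists>R. \<forall>x. R < v x \<longrightarrow> (if v x \<le> r then c else 0) = 0"
    by (intro exI[of _ r] allI impI) simp
qed

lemma zero_na_schwartz: "nonarch_schwartz v (\<lambda>x. 0)"
  unfolding nonarch_schwartz_def
proof (intro conjI allI)
  fix x :: 'a
  show "\<exists>e>0. \<forall>y. v (y - x) < e \<longrightarrow> (0::complex) = 0" by (rule exI[of _ 1]) simp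
next
  show "\<exists>R. \<forall>x. R < v x \<longrightarrow> (0::complex) = 0" by (rule exI[of _ 0]) simp
qed

lemma nonarch_part:
  assumes sch: "nonarch_schwartz2 v \<phi>"
  shows "\<exists>I :: nat set. \<exists>A B :: nat \<Rightarrow> 'a \<Rightarrow> complex. \<exists>C :: real.
         finite I \<and> (\<forall>i\<in>I. nonarch_schwartz v (A i) \<and> nonarch_schwartz v (B i)) \<and> C > 0 \<and>
         (\<forall>a::'a. a \<noteq> 0 \<longrightarrow>
            H_na \<pi> \<phi> a \<le> ennreal ((\<Sum>i\<in>I. norm (A i a))
                                   + \<bar>ln (v a)\<bar> * (\<Sum>i\<in>I. norm (B i a)) + C))"
proof -
  obtain M where M0: "M \<ge> 0" and M: "\<And>x y. norm (\<phi> (x, y)) \<le> M"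
    using phi_bounded[OF sch] by blast
  obtain R where R: "\<forall>x y. R < max (v x) (v y) \<longrightarrow> \<phi> (x, y) = 0"
    using sch unfolding nonarch_schwartz2_def by blast
  obtain K where K: "R < v \<pi> powi (- int K)" using big_pow by blast
  define r where "r = v \<pi> powi (- 2 * int K)"
  have r0: "r > 0" unfolding r_def using rho by simp
  have lnr: "ln (v \<pi>) < 0" using rho by simp
  define c where "c = M / (- ln (v \<pi>))"
  have c0: "c \<ge> 0" unfolding c_def using M0 lnr by (intro divide_nonneg_pos) auto
  define A :: "nat \<Rightarrow> 'a \<Rightarrow> complex" where "A = (\<lambda>i x. 0)"
  define B :: "nat \<Rightarrow> 'a \<Rightarrow> complex" where "B = (\<lambda>i x. if v x \<le> r then complex_of_real c else 0)"
  define C where "C = M * (2 * real K + 1) + 1"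
  have "M * (2 * real K + 1) \<ge> 0" using M0 by simp
  then have C0: "C > 0" unfolding C_def by linarith
  have sA: "nonarch_schwartz v (A 0)" unfolding A_def by (rule zero_na_schwartz)
  have sB: "nonarch_schwartz v (B 0)" unfolding B_def by (rule ball_ind_schwartz[OF r0])
  have bound: "H_na \<pi> \<phi> a \<le> ennreal ((\<Sum>i\<in>{0}. norm (A i a)) + \<bar>ln (v a)\<bar> * (\<Sum>i\<in>{0}. norm (B i a)) + C)"
    if a: "a \<noteq> 0" for a
  proof -
    obtain n where n: "v a = v \<pi> powi n" using v_disc[OF a] by blast
    define S where "S = {- int K - n .. int K}"
    have pw: "ennreal (norm (\<phi> (a * \<pi> powi b, \<pi> powi (- b)))) \<le> ennreal M * indicator S b" for b
    proof (cases "b \<in> S")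
      case True then show ?thesis using M by (simp add: ennreal_leI)
    next
      case False
      have "R < max (v (a * \<pi> powi b)) (v (\<pi> powi (- b)))"
      proof (cases "b > int K")
        case True
        then have "v \<pi> powi (- int K) < v \<pi> powi (- b)" using powi_less_iff by simp
        then show ?thesis using K by (simp add: v_powi)
      next
        case False2: False
        then have "b < - int K - n" using False unfolding S_def by auto
        then have "v \<pi> powi (- int K) < v \<pi> powi (n + b)" using powi_less_iff by simp
        also have "v \<pi> powi (n + b) = v (a * \<pi> powi b)" using rho
          by (simp add: v_mult v_powi n power_int_add)
        finally show ?thesis using K by simp
      qed
      then have "\<phi> (a * \<pi> powi b, \<pi> powi (- b)) = 0" using R by blast
      then show ?thesis by simp
    qed
    have "H_na \<pi> \<phi> a \<le> (\<integral>\<^sup>+ b. ennreal M * indicator S b \<partial>count_space UNIV)"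
      unfolding H_na_def by (intro nn_integral_mono pw)
    also have "\<dots> = ennreal M * emeasure (count_space UNIV) S"
      by (rule nn_integral_cmult_indicator) simp
    also have "\<dots> = ennreal M * of_nat (card S)"
      unfolding S_def by (subst emeasure_count_space_finite) auto
    also have "\<dots> = ennreal (M * real (card S))"
      using M0 by (simp add: ennreal_mult ennreal_of_nat_eq_real_of_nat)
    also have "\<dots> \<le> ennreal ((\<Sum>i\<in>{0}. norm (A i a)) + \<bar>ln (v a)\<bar> * (\<Sum>i\<in>{0}. norm (B i a)) + C)"
    proof (rule ennreal_leI)
      have cS: "real (card S) = real (nat (2 * int K + n + 1))" unfolding S_def by simp
      have lnva: "\<bar>ln (v a)\<bar> = \<bar>of_int n\<bar> * (- ln (v \<pi>))" unfolding n ln_powi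
        using lnr by (simp add: abs_mult)
      show "M * real (card S) \<le> (\<Sum>i\<in>{0}. norm (A i a)) + \<bar>ln (v a)\<bar> * (\<Sum>i\<in>{0}. norm (B i a)) + C"
      proof (cases "2 * int K + n + 1 \<le> 0")
        case True
        then have "real (card S) = 0" unfolding cS by simp
        moreover have "0 \<le> \<bar>ln (v a)\<bar> * (\<Sum>i\<in>{0}. norm (B i a))" by simp
        ultimately show ?thesis using C0 by (simp add: A_def)
      next
        case False
        then have cS': "real (card S) = 2 * real K + of_int n + 1" unfolding cS by simp
        have "v a \<le> r" unfolding n r_def using False powi_le_iff[OF rho, of n "- 2 * int K"] by simp
        then have nB: "norm (B 0 a) = c" unfolding B_def using c0 by simp
        have "\<bar>ln (v a)\<bar> * norm (B 0 a) = \<bar>of_int n\<bar> * M"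
          unfolding lnva nB c_def using lnr by (simp add: field_simps)
        moreover have "M * (2 * real K + of_int n + 1) \<le> \<bar>of_int n\<bar> * M + M * (2 * real K + 1)"
        proof -
          have "M * of_int n \<le> M * \<bar>of_int n\<bar>" by (rule mult_left_mono) (use M0 in auto)
          then show ?thesis by (simp add: algebra_simps)
        qed
        ultimately show ?thesis unfolding cS' C_def A_def by simp
      qed
    qed
    finally show ?thesis .
  qed
  have s2: "\<forall>i\<in>{0::nat}. nonarch_schwartz v (A i) \<and> nonarch_schwartz v (B i)" using sA sB by simp
  have b2: "\<forall>a::'a. a \<noteq> 0 \<longrightarrow> H_na \<pi> \<phi> a \<le> ennreal ((\<Sum>i\<in>{0}. norm (A i a)) + \<bar>ln (v a)\<bar> * (\<Sum>i\<in>{0}. norm (B i a)) + C)"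
    using bound by blast
  have f2: "finite {0::nat}" by simp
  show ?thesis
    apply (rule exI[of _ "{0::nat}"])
    apply (rule exI[of _ A])
    apply (rule exI[of _ B])
    apply (rule exI[of _ C])
    using f2 s2 C0 b2 by (intro conjI)
qed

end

theorem lemma4p3:
  fixes v :: "'a::field_char_0 \<Rightarrow> real" and \<pi> :: 'a
  shows
  "(\<forall>\<phi>. schwartz_R2 \<phi> \<longrightarrow>
      (\<exists>I :: nat set. \<exists>A B :: nat \<Rightarrow> real \<Rightarrow> complex. \<exists>C :: real.
         finite I \<and> (\<forall>i\<in>I. schwartz_R (A i) \<and> schwartz_R (B i)) \<and> C > 0 \<and>
         (\<forall>a::real. a \<noteq> 0 \<longrightarrow>
            H_R \<phi> a \<le> ennreal ((\<Sum>i\<in>I. norm (A i a))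
                                 + \<bar>ln \<bar>a\<bar>\<bar> * (\<Sum>i\<in>I. norm (B i a)) + C))))
   \<and>
   (nonarch_local_field v \<pi> \<longrightarrow>
    (\<forall>\<phi>. nonarch_schwartz2 v \<phi> \<longrightarrow>
      (\<exists>I :: nat set. \<exists>A B :: nat \<Rightarrow> 'a \<Rightarrow> complex. \<exists>C :: real.
         finite I \<and> (\<forall>i\<in>I. nonarch_schwartz v (A i) \<and> nonarch_schwartz v (B i)) \<and> C > 0 \<and>
         (\<forall>a::'a. a \<noteq> 0 \<longrightarrow>
            H_na \<pi> \<phi> a \<le> ennreal ((\<Sum>i\<in>I. norm (A i a))
                                   + \<bar>ln (v a)\<bar> * (\<Sum>i\<in>I. norm (B i a)) + C)))))"
proof (intro conjI allI impI)
  fix \<phi> :: "real \<times> real \<Rightarrow> complex"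
  assume "schwartz_R2 \<phi>"
  then show "\<exists>I :: nat set. \<exists>A B :: nat \<Rightarrow> real \<Rightarrow> complex. \<exists>C :: real.
         finite I \<and> (\<forall>i\<in>I. schwartz_R (A i) \<and> schwartz_R (B i)) \<and> C > 0 \<and>
         (\<forall>a::real. a \<noteq> 0 \<longrightarrow>
            H_R \<phi> a \<le> ennreal ((\<Sum>i\<in>I. norm (A i a))
                                 + \<bar>ln \<bar>a\<bar>\<bar> * (\<Sum>i\<in>I. norm (B i a)) + C))"
    by (rule real_part)
next
  fix \<phi> :: "'a \<times> 'a \<Rightarrow> complex"
  assume "nonarch_local_field v \<pi>" "nonarch_schwartz2 v \<phi>"
  then show "\<exists>I :: nat set. \<exists>A B :: nat \<Rightarrow> 'a \<Rightarrow> complex. \<exists>C :: real.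
         finite I \<and> (\<forall>i\<in>I. nonarch_schwartz v (A i) \<and> nonarch_schwartz v (B i)) \<and> C > 0 \<and>
         (\<forall>a::'a. a \<noteq> 0 \<longrightarrow>
            H_na \<pi> \<phi> a \<le> ennreal ((\<Sum>i\<in>I. norm (A i a))
                                   + \<bar>ln (v a)\<bar> * (\<Sum>i\<in>I. norm (B i a)) + C))"
    by (rule nonarch_part)
qed

end
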